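(* Consider the algorithm described below (Algorithm A) for a real Hilbert space $H$, a nonempty closed convex set $C\subseteq H$ and a mapping $F\colon H\to H$ that is monotone and Lipschitz continuous with constant $L>0$, where the solution set $S$ of the variational inequality "find $x^*\in C$ with $\langle F(x^* ),x-x^*\rangle\ge0$ for all $x\in C$" is nonempty. Let $(x_n)$, $(y_n)$, $(\lambda_n)$ be the sequences generated by Algorithm A (with their final values after any modification in Step 4), with $\alpha\in(0,\sqrt2-1)$, and let $z\in S$. Then for every $n\ge1$, $$\|x_{n+1}-z\|^2\le\|x_n-z\|^2-(1-\alpha(1+\sqrt2))\|x_n-y_n\|^2-(1-\sqrt2\alpha)\|x_{n+1}-y_n\|^2+\alpha\|x_n-y_{n-1}\|^2-2\lambda_n\langle F(z),y_n-z\rangle.$$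
   Context: Convention: $0/0=+\infty$ and $1/0=+\infty$. $P_C$ is the metric projection onto $C$. Algorithm A: Step 1. Choose $x_0\in C$, $\lambda_{-1}>0$, $\theta_0=1$, $\alpha\in(0,\sqrt2-1)$ and $\bar\lambda>0$. Compute $y_0=P_C(x_0-\lambda_{-1}F(x_0))$, $\lambda_0=\min\{\alpha\|x_0-y_0\|/\|F(x_0)-F(y_0)\|,\bar\lambda\}$, $x_1=P_C(x_0-\lambda_0F(y_0))$. Step 2 (for $n\ge1$). Set $\theta_n=1$ and define, for $y\in H$, $\theta>0$, $\lambda(y,\theta)=\min\{\alpha\|y-y_{n-1}\|/\|F(y)-F(y_{n-1})\|,\ \frac{1+\theta_{n-1}}{\theta}\lambda_{n-1},\ \bar\lambda\}$. Compute $y_n=2x_n-x_{n-1}$, $\lambda_n=\lambda(y_n,\theta_n)$, $x_{n+1}=P_C(x_n-\lambda_nF(y_n))$. Step 3. If $\|y_n-P_C(x_n-\lambda_nF(y_n))\|+\|x_n-y_n\|=0$, stop ($x_n$ is a solution). Otherwise compute $t_n=-\|x_{n+1}-x_n\|^2+2\lambda_n\langle F(y_n),y_n-x_{n+1}\rangle+(1-\alpha(1+\sqrt2))\|x_n-y_n\|^2-\alpha\|x_n-y_{n-1}\|^2+(1-\sqrt2\alpha)\|x_{n+1}-y_n\|^2$. Step 4. If $t_n\le0$, go to Step 2 with $n:=n+1$. Otherwise: (i) if $\lambda_n\ge\lambda_{n-1}$, choose $\lambda_n'\in[\lambda_{n-1},\lambda_n]$ with $\|\lambda_n'F(y_n)-\lambda_{n-1}F(y_{n-1})\|\le\alpha\|y_n-y_{n-1}\|$,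 recompute $x_{n+1}=P_C(x_n-\lambda_n'F(y_n))$, set $\lambda_n:=\lambda_n'$, $n:=n+1$, go to Step 2; (ii) if $\lambda_n<\lambda_{n-1}$, find $\theta_n'\in(0,1]$ such that, with $y_n'=x_n+\theta_n'(x_n-x_{n-1})$, one has $\lambda(y_n',\theta_n')\ge\theta_n'\lambda_{n-1}$; then choose $\lambda_n'\in[\theta_n'\lambda_{n-1},\lambda(y_n',\theta_n')]$ with $\|\lambda_n'F(y_n')-\theta_n'\lambda_{n-1}F(y_{n-1})\|\le\alpha\|y_n'-y_{n-1}\|$, recompute $x_{n+1}=P_C(x_n-\lambda_n'F(y_n'))$, set $\lambda_n:=\lambda_n'$, $\theta_n:=\theta_n'$, $y_n:=y_n'$, $n:=n+1$, go to Step 2. *)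

theory Defs
  imports "HOL-Analysis.Analysis"
begin

text \<open>Metric projection onto C (the nearest point of C to u); in a real Hilbert space it
exists and is unique when C is nonempty, closed and convex.\<close>
definition metric_proj :: "'a::real_inner set \<Rightarrow> 'a \<Rightarrow> 'a" where
  "metric_proj C u = (SOME p. p \<in> C \<and> (\<forall>y\<in>C. dist u p \<le> dist u y))"

text \<open>min of (a / b) and c, with the convention a/0 = +infinity (so the quotient is dropped
when b = 0).\<close>
definition min_quot :: "real \<Rightarrow> real \<Rightarrow> real \<Rightarrow> real" where
  "min_quot a b c = (if b = 0 then c else min (a / b) c)"

definition monotone_op :: "('a::real_inner \<Rightarrow> 'a) \<Rightarrow> bool" where
  "monotone_op F \<longleftrightarrow> (\<forall>x y. inner (F x - F y) (x - y) \<ge> 0)"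

definition VI_sol :: "'a::real_inner set \<Rightarrow> ('a \<Rightarrow> 'a) \<Rightarrow> 'a set" where
  "VI_sol C F = {xs \<in> C. \<forall>x\<in>C. inner (F xs) (x - xs) \<ge> 0}"

definition step_lam :: "('a::real_inner \<Rightarrow> 'a) \<Rightarrow> real \<Rightarrow> real \<Rightarrow> 'a \<Rightarrow> real \<Rightarrow> real \<Rightarrow> 'a \<Rightarrow> real \<Rightarrow> real" where
  "step_lam F \<alpha> lbar yprev lprev thprev y \<theta> =
     min_quot (\<alpha> * norm (y - yprev)) (norm (F y - F yprev)) (min ((1 + thprev) / \<theta> * lprev) lbar)"

definition algA_init where
  "algA_init C F \<alpha> lbar lm1 x y lam theta \<longleftrightarrow>
     x 0 \<in> C \<and> lm1 > 0 \<and> theta 0 = (1::real) \<and>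
     y 0 = metric_proj C (x 0 - lm1 *\<^sub>R F (x 0)) \<and>
     lam 0 = min_quot (\<alpha> * norm (x 0 - y 0)) (norm (F (x 0) - F (y 0))) lbar \<and>
     x 1 = metric_proj C (x 0 - lam 0 *\<^sub>R F (y 0))"

text \<open>Iteration n (n >= 1) of Steps 2--4, assuming the algorithm does not stop in Step 3 at n.
The sequences x, y, lam, theta hold the final values (after any modification in Step 4).\<close>
definition algA_step where
  "algA_step C F \<alpha> lbar x y lam theta n \<longleftrightarrow>
    (let y0 = 2 *\<^sub>R x n - x (n - 1);
         l0 = step_lam F \<alpha> lbar (y (n - 1)) (lam (n - 1)) (theta (n - 1)) y0 1;
         x0 = metric_proj C (x n - l0 *\<^sub>R F y0);
         t = - (norm (x0 - x n))\<^sup>2 + 2 * l0 * inner (F y0) (y0 - x0)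
             + (1 - \<alpha> * (1 + sqrt 2)) * (norm (x n - y0))\<^sup>2
             - \<alpha> * (norm (x n - y (n - 1)))\<^sup>2
             + (1 - sqrt 2 * \<alpha>) * (norm (x0 - y0))\<^sup>2
     in norm (y0 - x0) + norm (x n - y0) \<noteq> 0 \<and>
        ((t \<le> 0 \<and> theta n = 1 \<and> y n = y0 \<and> lam n = l0 \<and> x (Suc n) = x0)
         \<or> (t > 0 \<and> l0 \<ge> lam (n - 1) \<and> theta n = 1 \<and> y n = y0 \<and>
            lam (n - 1) \<le> lam n \<and> lam n \<le> l0 \<and>
            norm (lam n *\<^sub>R F (y n) - lam (n - 1) *\<^sub>R F (y (n - 1))) \<le> \<alpha> * norm (y n - y (n - 1)) \<and>
            x (Suc n) = metric_proj C (x n - lam n *\<^sub>R F (y n)))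
         \<or> (t > 0 \<and> l0 < lam (n - 1) \<and> 0 < theta n \<and> theta n \<le> 1 \<and>
            y n = x n + theta n *\<^sub>R (x n - x (n - 1)) \<and>
            step_lam F \<alpha> lbar (y (n - 1)) (lam (n - 1)) (theta (n - 1)) (y n) (theta n) \<ge> theta n * lam (n - 1) \<and>
            theta n * lam (n - 1) \<le> lam n \<and>
            lam n \<le> step_lam F \<alpha> lbar (y (n - 1)) (lam (n - 1)) (theta (n - 1)) (y n) (theta n) \<and>
            norm (lam n *\<^sub>R F (y n) - (theta n * lam (n - 1)) *\<^sub>R F (y (n - 1))) \<le> \<alpha> * norm (y n - y (n - 1)) \<and>
            x (Suc n) = metric_proj C (x n - lam n *\<^sub>R F (y n)))))"

end

theory Submission
  imports Defs
begin

lemma sq_add: "(norm (a + b))\<^sup>2 = (norm a)\<^sup>2 + (norm b)\<^sup>2 + 2 * inner a b"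
  for a b :: "'a::real_inner"
  by (simp add: power2_norm_eq_inner inner_add inner_commute)

lemma proj_exists:
  fixes C :: "'a::{real_inner, complete_space} set"
  assumes ne: "C \<noteq> {}" and cl: "closed C" and cv: "convex C"
  shows "\<exists>p. p \<in> C \<and> (\<forall>y\<in>C. dist u p \<le> dist u y)"
proof -
  define d where "d = Inf (dist u ` C)"
  have bdd: "bdd_below (dist u ` C)" by (rule bdd_belowI[of _ 0]) auto
  have dle: "d \<le> dist u c" if "c \<in> C" for c
    unfolding d_def using bdd that by (simp add: cInf_lower)
  have d0: "0 \<le> d" unfolding d_def using ne by (intro cInf_greatest) auto
  have "\<forall>k::nat. \<exists>c. c \<in> C \<and> dist u c < d + 1 / real (Suc k)"
  proof
    fix k :: nat
    have "Inf (dist u ` C) < d + 1 / real (Suc k)" unfolding d_def by simp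
    then obtain r where "r \<in> dist u ` C" "r < d + 1 / real (Suc k)"
      using cInf_lessD ne by (metis image_is_empty)
    then show "\<exists>c. c \<in> C \<and> dist u c < d + 1 / real (Suc k)" by auto
  qed
  then obtain f where fC: "\<And>k. f k \<in> C" and fd: "\<And>k. dist u (f k) < d + 1 / real (Suc k)"
    by metis
  have key: "(norm (f i - f j))\<^sup>2 \<le> 2 * (2*d+1) * (1 / real (Suc i) + 1 / real (Suc j))" for i j
  proof -
    define m where "m = (1/2) *\<^sub>R (f i + f j)"
    have mC: "m \<in> C"
    proof -
      have "(1 - 1/2) *\<^sub>R f i + (1/2) *\<^sub>R f j \<in> C" using cv fC by (intro convexD_alt) auto
      moreover have "(1 - 1/2) *\<^sub>R f i + (1/2::real) *\<^sub>R f j = m" unfolding m_def by (simp add: algebra_simps)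
      ultimately show ?thesis by simp
    qed
    have dm: "d \<le> norm (u - m)" using dle[OF mC] by (simp add: dist_norm)
    have par: "(norm (f i - f j))\<^sup>2 = 2 * (norm (u - f i))\<^sup>2 + 2 * (norm (u - f j))\<^sup>2 - 4 * (norm (u - m))\<^sup>2"
    proof -
      have e1: "u - m = (1/2) *\<^sub>R ((u - f i) + (u - f j))" unfolding m_def
        by (simp add: algebra_simps flip: scaleR_add_left)
      have e2: "f i - f j = (u - f j) - (u - f i)" by simp
      show ?thesis unfolding e1 e2
        by (simp add: power2_norm_eq_inner inner_add inner_diff inner_commute algebra_simps)
    qed
    have "d*d \<le> norm (u - m) * norm (u - m)" using dm d0 by (simp add: mult_mono)
    hence m2: "d^2 \<le> (norm (u - m))\<^sup>2" by (simp add: power2_eq_square)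
    have b: "(norm (u - f k))\<^sup>2 \<le> d^2 + (2*d+1) * (1 / real (Suc k))" for k
    proof -
      define e where "e = 1 / real (Suc k)"
      have e0: "0 < e" "e \<le> 1" unfolding e_def by (auto simp: field_simps)
      have "norm (u - f k) < d + e" using fd[of k] by (simp add: dist_norm e_def)
      hence "norm (u - f k) * norm (u - f k) \<le> (d + e) * (d + e)"
        using d0 e0 by (intro mult_mono) auto
      moreover have "(d+e)*(d+e) \<le> d^2 + (2*d+1)*e"
        using e0 d0 by (simp add: power2_eq_square algebra_simps mult_left_le_one_le)
      ultimately show ?thesis by (simp add: power2_eq_square e_def)
    qed
    have "(norm (f i - f j))\<^sup>2 \<le> 2*((2*d+1) * (1 / real (Suc i))) + 2*((2*d+1) * (1 / real (Suc j)))"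
      using par m2 b[of i] b[of j] by linarith
    thus ?thesis by (simp add: algebra_simps)
  qed
  have "Cauchy f"
  proof (rule metric_CauchyI)
    fix e :: real assume e: "0 < e"
    obtain M :: nat where M: "4 * (2*d+1) / (e*e) < real M" using reals_Archimedean2 by blast
    have "\<forall>i\<ge>M. \<forall>j\<ge>M. dist (f i) (f j) < e"
    proof (intro allI impI)
      fix i j assume ij: "M \<le> i" "M \<le> j"
      have ii: "1 / real (Suc i) \<le> 1 / real (Suc M)" "1 / real (Suc j) \<le> 1 / real (Suc M)"
        using ij by (auto simp: field_simps)
      have ee: "0 < e*e" using e by simp
      have "4*(2*d+1)/(e*e) < real (Suc M)" using M by simp
      hence "4*(2*d+1) < real (Suc M) * (e*e)" using ee by (simp add: divide_less_eq)
      hence k1: "4*(2*d+1)/real (Suc M) < e*e" by (simp add: divide_less_eq mult.commute)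
      have "1 / real (Suc i) + 1 / real (Suc j) \<le> 2 / real (Suc M)" using ii by simp
      hence "2*(2*d+1) * (1 / real (Suc i) + 1 / real (Suc j)) \<le> 2*(2*d+1) * (2 / real (Suc M))"
        using d0 by (intro mult_left_mono) auto
      hence "(norm (f i - f j))\<^sup>2 \<le> 4*(2*d+1)/real (Suc M)" using key[of i j] by simp
      hence "(norm (f i - f j))\<^sup>2 < e*e" using k1 by linarith
      hence "(norm (f i - f j))\<^sup>2 < e\<^sup>2" by (simp add: power2_eq_square)
      hence "norm (f i - f j) < e" by (rule power_less_imp_less_base) (use e in auto)
      thus "dist (f i) (f j) < e" by (simp add: dist_norm)
    qed
    thus "\<exists>M. \<forall>m\<ge>M. \<forall>n\<ge>M. dist (f m) (f n) < e" by blast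
  qed
  then obtain p where lim: "f \<longlonglongrightarrow> p" using Cauchy_convergent_iff convergent_def by blast
  have pC: "p \<in> C" using cl fC lim closed_sequentially by blast
  have l1: "(\<lambda>k. dist u (f k)) \<longlonglongrightarrow> dist u p" by (intro tendsto_intros lim)
  have l2: "(\<lambda>k. d + 1 / real (Suc k)) \<longlonglongrightarrow> d + 0"
    by (intro tendsto_intros) (simp add: LIMSEQ_inverse_real_of_nat[unfolded inverse_eq_divide] del: of_nat_Suc)
  have "dist u p \<le> d + 0" using l1 l2 fd by (meson LIMSEQ_le less_imp_le)
  hence "\<forall>y\<in>C. dist u p \<le> dist u y" using dle by fastforce
  thus ?thesis using pC by blast
qed

lemma proj_props:
  fixes C :: "'a::{real_inner, complete_space} set"
  assumes ne: "C \<noteq> {}" and cl: "closed C" and cv: "convex C"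
  shows "metric_proj C u \<in> C \<and> (\<forall>y\<in>C. inner (u - metric_proj C u) (y - metric_proj C u) \<le> 0)"
proof -
  define p where "p = metric_proj C u"
  have P: "p \<in> C \<and> (\<forall>y\<in>C. dist u p \<le> dist u y)"
    unfolding p_def metric_proj_def using someI_ex[OF proj_exists[OF assms]] by blast
  have "inner (u - p) (y - p) \<le> 0" if yC: "y \<in> C" for y
  proof (rule ccontr)
    define a where "a = inner (u - p) (y - p)"
    define N where "N = (norm (y - p))\<^sup>2"
    assume "\<not> ?thesis" hence a0: "a > 0" unfolding a_def by simp
    have N0: "N \<ge> 0" unfolding N_def by simp
    define t where "t = min 1 (a / (N + 1))"
    have t0: "0 < t" "t \<le> 1" unfolding t_def using a0 N0 by auto
    have "p + t *\<^sub>R (y - p) \<in> C"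
    proof -
      have "(1 - t) *\<^sub>R p + t *\<^sub>R y \<in> C" using cv P yC t0 by (simp add: convexD_alt)
      moreover have "(1 - t) *\<^sub>R p + t *\<^sub>R y = p + t *\<^sub>R (y - p)" by (simp add: algebra_simps)
      ultimately show ?thesis by simp
    qed
    hence "norm (u - p) \<le> norm (u - (p + t *\<^sub>R (y - p)))" using P by (simp add: dist_norm)
    hence "(norm (u - p))\<^sup>2 \<le> (norm ((u - p) + (- t) *\<^sub>R (y - p)))\<^sup>2"
      by (simp add: power_mono algebra_simps)
    also have "\<dots> = (norm (u - p))\<^sup>2 + t*t*N - 2*t*a"
      unfolding sq_add a_def N_def by (simp add: power2_eq_square)
    finally have "2*t*a \<le> t*t*N" by simp
    hence "2*a \<le> t*N" using t0 by (simp add: power2_eq_square mult.assoc)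
    moreover have "t \<le> a / (N+1)" unfolding t_def by simp
    hence "t*N \<le> a / (N+1) * N" using N0 by (rule mult_right_mono)
    moreover have "a / (N+1) * N < a" using a0 N0 by (simp add: field_simps)
    ultimately show False using a0 by linarith
  qed
  thus ?thesis using P p_def by blast
qed

lemma scalar_ineq:
  fixes a b c d \<alpha> :: real
  assumes "0 \<le> a" "0 \<le> b" "0 \<le> c" "0 \<le> d" "a \<le> c + d" "0 < \<alpha>"
  shows "- (b^2) - (c^2) + 2*\<alpha>*a*b \<le> -(1 - \<alpha>*(1 + sqrt 2))*c^2 - (1 - sqrt 2*\<alpha>)*b^2 + \<alpha>*d^2"
proof -
  define s where "s = sqrt 2"
  have s2: "s* s = 2" unfolding s_def by simp
  have s0: "s > 0" unfolding s_def by simp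
  have "2*a*b \<le> 2*(c+d)*b" using assms by (simp add: mult_right_mono)
  moreover have "2*(c+d)*b \<le> (1+s)*c^2 + s * b^2 + d^2"
  proof -
    have i1: "(c+d-s * b)^2 = (c+d)^2 - s * (2*(c+d)*b) + (s * s)*b^2" by (simp add: power2_eq_square algebra_simps)
    have k1: "s * (2*(c+d)*b) \<le> (c+d)^2 + 2*b^2" 
    proof -
      have "(s * s)*b^2 = 2*b^2" using s2 by simp
      moreover have "0 \<le> (c+d-s * b)^2" by simp
      ultimately show ?thesis using i1 by linarith
    qed
    have i2: "(s+1)*((2+s)*c^2 + s * d^2 - (c+d)^2) = ((1+s)*c - d)^2 + (s * s-2)*d^2"
      by (simp add: power2_eq_square algebra_simps)
    have "0 \<le> (s+1)*((2+s)*c^2 + s * d^2 - (c+d)^2)" unfolding i2 s2 by simp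
    hence k2: "(c+d)^2 \<le> (2+s)*c^2 + s * d^2" using s0 by (simp add: zero_le_mult_iff)
    have i3: "s * ((1+s)*c^2 + s * b^2 + d^2) = (2+s)*c^2 + s * d^2 + 2*b^2 + (s * s-2)*(c^2+b^2)"
      by (simp add: power2_eq_square algebra_simps)
    have "s * (2*(c+d)*b) \<le> s * ((1+s)*c^2 + s * b^2 + d^2)" unfolding i3 s2 using k1 k2 by simp
    thus ?thesis using s0 by simp
  qed
  ultimately have "2*a*b \<le> (1+s)*c^2 + s*b^2 + d^2" by linarith
  hence "\<alpha>*(2*a*b) \<le> \<alpha>*((1+s)*c^2 + s*b^2 + d^2)" using assms by (simp add: mult_left_mono)
  thus ?thesis unfolding s_def by (simp add: algebra_simps)
qed

lemma stepA:
  fixes F :: "'a::real_inner \<Rightarrow> 'a"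
  assumes H: "inner (xn - l *\<^sub>R F yn - xs) (z - xs) \<le> 0"
    and l: "0 \<le> l" and mono: "monotone_op F"
  shows "(norm (xs - z))\<^sup>2 \<le> (norm (xn - z))\<^sup>2 - (norm (xs - xn))\<^sup>2
      + 2*l*inner (F yn) (yn - xs) - 2*l*inner (F z) (yn - z)"
proof -
  have id: "(norm (xn - z))\<^sup>2 = (norm (xn - xs))\<^sup>2 + (norm (xs - z))\<^sup>2 + 2 * inner (xn - xs) (xs - z)"
    using sq_add[of "xn - xs" "xs - z"] by simp
  have n: "norm (xn - xs) = norm (xs - xn)" by (simp add: norm_minus_commute)
  have m: "0 \<le> inner (F yn - F z) (yn - z)" using mono unfolding monotone_op_def by blast
  hence m2: "0 \<le> l * inner (F yn - F z) (yn - z)" using l by simp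
  have H2: "inner (xn - xs) (z - xs) \<le> l * inner (F yn) (z - xs)"
    using H by (simp add: inner_diff_left)
  have e1: "inner (xn - xs) (xs - z) = - inner (xn - xs) (z - xs)"
    by (metis inner_minus_right minus_diff_eq)
  have e2: "inner (F yn) (z - xs) = inner (F yn) (yn - xs) - inner (F yn) (yn - z)"
    by (simp add: inner_diff_right)
  have e3: "l * inner (F yn - F z) (yn - z) = l * inner (F yn) (yn - z) - l * inner (F z) (yn - z)"
    by (simp add: inner_diff_left algebra_simps)
  show ?thesis using id n m2 H2 e1 e2 e3 by (simp add: algebra_simps)
qed

lemma norm_scale_sq: "(norm (t *\<^sub>R v))\<^sup>2 = t*t*inner v v" for v :: "'a::real_inner"
proof -
  have "(norm (t *\<^sub>R v))\<^sup>2 = t\<^sup>2 * (norm v)\<^sup>2" by (simp add: power_mult_distrib)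
  also have "\<dots> = t\<^sup>2 * inner v v" by (simp only: power2_norm_eq_inner)
  finally show ?thesis by (simp add: power2_eq_square)
qed

lemma stepB:
  fixes F :: "'a::real_inner \<Rightarrow> 'a"
  assumes G1: "inner (xp - lp *\<^sub>R F yp - xn) (xs - xn) \<le> 0"
    and G2: "inner (xp - lp *\<^sub>R F yp - xn) (xp - xn) \<le> 0"
    and yn: "yn = xn + th *\<^sub>R (xn - xp)" and th: "0 \<le> th"
    and lip: "norm (l *\<^sub>R F yn - (th*lp) *\<^sub>R F yp) \<le> \<alpha> * norm (yn - yp)"
    and al: "0 < \<alpha>"
  shows "- (norm (xs - xn))\<^sup>2 + 2*l*inner (F yn) (yn - xs) \<le>
     -(1 - \<alpha>*(1 + sqrt 2))*(norm (xn - yn))\<^sup>2 - (1 - sqrt 2*\<alpha>)*(norm (xs - yn))\<^sup>2 + \<alpha>*(norm (xn - yp))\<^sup>2"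
proof -
  define v where "v = xn - xp"
  define \<mu> where "\<mu> = th * lp"
  define a where "a = norm (yn - yp)"
  define b where "b = norm (xs - yn)"
  define c where "c = norm (xn - yn)"
  define d where "d = norm (xn - yp)"
  have E1: "l*inner (F yn) (yn - xs) = inner (l *\<^sub>R F yn - \<mu> *\<^sub>R F yp) (yn - xs) + \<mu> * inner (F yp) (yn - xs)"
    by (simp add: inner_diff_left)
  have "inner (l *\<^sub>R F yn - \<mu> *\<^sub>R F yp) (yn - xs) \<le> norm (l *\<^sub>R F yn - \<mu> *\<^sub>R F yp) * norm (yn - xs)"
    by (rule norm_cauchy_schwarz)
  also have "\<dots> \<le> \<alpha> * a * b" 
    using lip by (simp add: a_def b_def \<mu>_def norm_minus_commute mult_right_mono)
  finally have E2: "inner (l *\<^sub>R F yn - \<mu> *\<^sub>R F yp) (yn - xs) \<le> \<alpha> * a * b" .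
  have G1': "th * inner (xp - xn) (xs - xn) \<le> \<mu> * inner (F yp) (xs - xn)"
  proof -
    have "inner (xp - xn) (xs - xn) \<le> lp * inner (F yp) (xs - xn)" using G1 by (simp add: inner_diff_left)
    hence "th * inner (xp - xn) (xs - xn) \<le> th * (lp * inner (F yp) (xs - xn))" using th by (rule mult_left_mono)
    thus ?thesis by (simp add: \<mu>_def)
  qed
  have G2': "th*th * inner v v \<le> - (th * \<mu> * inner (F yp) v)"
  proof -
    have "inner (xp - xn) (xp - xn) \<le> lp * inner (F yp) (xp - xn)" using G2 by (simp add: inner_diff_left)
    moreover have "xp - xn = - v" by (simp add: v_def)
    ultimately have "inner v v \<le> - (lp * inner (F yp) v)" by simp
    hence "th*th * inner v v \<le> th*th * (- (lp * inner (F yp) v))" using th by (intro mult_left_mono) auto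
    thus ?thesis by (simp add: \<mu>_def algebra_simps)
  qed
  have yv: "yn = xn + th *\<^sub>R v" using yn v_def by simp
  have E3: "\<mu> * inner (F yp) (yn - xs) = th * \<mu> * inner (F yp) v - \<mu> * inner (F yp) (xs - xn)"
    unfolding yv by (simp add: inner_diff_right inner_add_right algebra_simps)
  have E4: "inner (xp - xn) (xs - xn) = - inner v (xs - xn)" unfolding v_def
    by (metis inner_minus_left minus_diff_eq)
  have E5: "(norm (xs - xn))\<^sup>2 = b^2 + 2*th*inner v (xs - xn) - th*th*inner v v"
  proof -
    have eq: "xs - yn = (xs - xn) + (-th) *\<^sub>R v" unfolding yv by (simp add: algebra_simps)
    have "b^2 = (norm (xs - xn))\<^sup>2 + (norm ((-th) *\<^sub>R v))\<^sup>2 + 2 * inner (xs - xn) ((-th) *\<^sub>R v)"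
      unfolding b_def eq by (rule sq_add)
    moreover have "(norm ((-th) *\<^sub>R v))\<^sup>2 = th*th*inner v v"
    proof -
      have "(norm ((-th) *\<^sub>R v))\<^sup>2 = th\<^sup>2 * (norm v)\<^sup>2" by (simp add: power_mult_distrib)
      also have "\<dots> = th\<^sup>2 * inner v v" by (simp only: power2_norm_eq_inner)
      finally show ?thesis by (simp add: power2_eq_square)
    qed
    moreover have "inner (xs - xn) ((-th) *\<^sub>R v) = - (th * inner v (xs - xn))" by (simp add: inner_commute)
    ultimately show ?thesis by linarith
  qed
  have E6: "c^2 = th*th*inner v v"
  proof -
    have "xn - yn = (-th) *\<^sub>R v" unfolding yv by simp
    thus ?thesis unfolding c_def using norm_scale_sq[of "-th" v] by simp
  qed
  have main: "- (norm (xs - xn))\<^sup>2 + 2*l*inner (F yn) (yn - xs) \<le> - (b^2) - (c^2) + 2*\<alpha>*a*b"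
  proof -
    have "th * inner (xp - xn) (xs - xn) = - (th * inner v (xs - xn))" using E4 by simp
    hence G1'': "- (\<mu> * inner (F yp) (xs - xn)) \<le> th * inner v (xs - xn)" using G1' by linarith
    have "2*l*inner (F yn) (yn - xs) = 2*(l*inner (F yn) (yn - xs))" by simp
    moreover have "\<alpha> * a * b = \<alpha> * a * b" ..
    ultimately show ?thesis using E1 E2 E3 G1'' G2' E5 E6 by linarith
  qed
  have tri: "a \<le> c + d"
  proof -
    have "yn - yp = (yn - xn) + (xn - yp)" by simp
    hence "norm (yn - yp) \<le> norm (yn - xn) + norm (xn - yp)" by (metis norm_triangle_ineq)
    thus ?thesis unfolding a_def c_def d_def by (simp add: norm_minus_commute)
  qed
  have "- (b^2) - (c^2) + 2*\<alpha>*a*b \<le> -(1 - \<alpha>*(1 + sqrt 2))*c^2 - (1 - sqrt 2*\<alpha>)*b^2 + \<alpha>*d^2"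
    using scalar_ineq[of a b c d \<alpha>] tri al by (simp add: a_def b_def c_def d_def)
  thus ?thesis using main by (simp add: b_def c_def d_def)
qed

lemma min_quot_nonneg: "0 \<le> a \<Longrightarrow> 0 \<le> b \<Longrightarrow> 0 \<le> c \<Longrightarrow> 0 \<le> min_quot a b c"
  unfolding min_quot_def by auto

lemma step_lam_nonneg:
  assumes "0 \<le> \<alpha>" "0 \<le> lp" "0 \<le> thp" "0 < \<theta>" "0 < lbar"
  shows "0 \<le> step_lam F \<alpha> lbar yp lp thp y \<theta>"
  unfolding step_lam_def using assms by (intro min_quot_nonneg) auto

lemma step_nonneg:
  assumes "algA_step C F \<alpha> lbar x y lam theta k" "0 \<le> lam (k-1)" "0 \<le> theta (k-1)" "0 < \<alpha>" "0 < lbar"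
  shows "0 \<le> lam k \<and> 0 \<le> theta k"
proof -
  have sl: "0 \<le> step_lam F \<alpha> lbar (y (k - 1)) (lam (k - 1)) (theta (k - 1)) (2 *\<^sub>R x k - x (k - 1)) 1"
    using assms by (intro step_lam_nonneg) auto
  show ?thesis using assms(1) sl assms(2)
    unfolding algA_step_def Let_def
    apply (elim conjE disjE)
    subgoal by simp
    subgoal by simp
    subgoal by (metis less_imp_le mult_nonneg_nonneg order_trans)
    done
qed

lemma step_info:
  assumes "algA_step C F \<alpha> lbar x y lam theta k"
  shows "x (Suc k) = metric_proj C (x k - lam k *\<^sub>R F (y k)) \<and>
    ((- (norm (x (Suc k) - x k))\<^sup>2 + 2 * lam k * inner (F (y k)) (y k - x (Suc k))
             + (1 - \<alpha> * (1 + sqrt 2)) * (norm (x k - y k))\<^sup>2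
             - \<alpha> * (norm (x k - y (k - 1)))\<^sup>2
             + (1 - sqrt 2 * \<alpha>) * (norm (x (Suc k) - y k))\<^sup>2 \<le> 0)
     \<or> (\<exists>th. 0 \<le> th \<and> y k = x k + th *\<^sub>R (x k - x (k - 1)) \<and>
          norm (lam k *\<^sub>R F (y k) - (th * lam (k - 1)) *\<^sub>R F (y (k - 1))) \<le> \<alpha> * norm (y k - y (k - 1))))"
proof -
  have two: "2 *\<^sub>R x k - x (k - 1) = x k + 1 *\<^sub>R (x k - x (k - 1))"
    by (simp add: scaleR_2 algebra_simps)
  show ?thesis using assms unfolding algA_step_def Let_def
    apply (elim conjE disjE)
    subgoal by simp
    subgoal using two by (intro conjI disjI2 exI[of _ 1]) auto
    subgoal by (intro conjI disjI2 exI[of _ "theta k"]) auto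
    done
qed

theorem lemma4p5:
  fixes C :: "'a::{real_inner, complete_space} set"
    and F :: "'a \<Rightarrow> 'a"
    and L \<alpha> lbar lm1 :: real
    and x y :: "nat \<Rightarrow> 'a" and lam theta :: "nat \<Rightarrow> real"
    and z :: 'a and n :: nat
  assumes "C \<noteq> {}" and "closed C" and "convex C"
    and "monotone_op F" and "L > 0" and "L-lipschitz_on UNIV F"
    and "VI_sol C F \<noteq> {}"
    and "0 < \<alpha>" and "\<alpha> < sqrt 2 - 1" and "lbar > 0"
    and "algA_init C F \<alpha> lbar lm1 x y lam theta"
    and "\<forall>k\<in>{1..n}. algA_step C F \<alpha> lbar x y lam theta k"
    and "z \<in> VI_sol C F"
    and "n \<ge> 1"
  shows "(norm (x (Suc n) - z))\<^sup>2 \<le> (norm (x n - z))\<^sup>2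
           - (1 - \<alpha> * (1 + sqrt 2)) * (norm (x n - y n))\<^sup>2
           - (1 - sqrt 2 * \<alpha>) * (norm (x (Suc n) - y n))\<^sup>2
           + \<alpha> * (norm (x n - y (n - 1)))\<^sup>2
           - 2 * lam n * inner (F z) (y n - z)"
proof -
  note PP = proj_props[OF assms(1-3)]
  have init: "x 0 \<in> C" "theta 0 = 1" "0 \<le> lam 0"
      "x 1 = metric_proj C (x 0 - lam 0 *\<^sub>R F (y 0))"
    using assms(11) assms(10) assms(8) unfolding algA_init_def
    by (auto intro!: min_quot_nonneg simp del: One_nat_def)
  have stp: "algA_step C F \<alpha> lbar x y lam theta k" if "1 \<le> k" "k \<le> n" for k
    using assms(12) that by auto
  have xp: "x (Suc k) = metric_proj C (x k - lam k *\<^sub>R F (y k))" if "k \<le> n" for k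
  proof (cases "k = 0")
    case True thus ?thesis using init by simp
  next
    case False thus ?thesis using step_info[OF stp[of k]] that by simp
  qed
  have xC: "x k \<in> C" if "k \<le> Suc n" for k
  proof (cases k)
    case 0 thus ?thesis using init by simp
  next
    case (Suc j) thus ?thesis using xp[of j] PP that by simp
  qed
  have nn: "0 \<le> lam k \<and> 0 \<le> theta k" if "k \<le> n" for k
    using that
  proof (induction k)
    case 0 thus ?case using init by simp
  next
    case (Suc j)
    hence "0 \<le> lam j \<and> 0 \<le> theta j" by simp
    thus ?case using step_nonneg[OF stp[of "Suc j"]] Suc.prems assms(8,10) by simp
  qed
  have zC: "z \<in> C" using assms(13) unfolding VI_sol_def by simp
  have H: "inner (x n - lam n *\<^sub>R F (y n) - x (Suc n)) (z - x (Suc n)) \<le> 0"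
    using PP[of "x n - lam n *\<^sub>R F (y n)"] zC xp[of n] by simp
  have A: "(norm (x (Suc n) - z))\<^sup>2 \<le> (norm (x n - z))\<^sup>2 - (norm (x (Suc n) - x n))\<^sup>2
      + 2*lam n*inner (F (y n)) (y n - x (Suc n)) - 2*lam n*inner (F z) (y n - z)"
  proof -
    have "0 \<le> lam n" using nn[of n] by simp
    from stepA[OF H this assms(4)] show ?thesis .
  qed
  from step_info[OF stp[of n]] assms(14)
  consider (t) "- (norm (x (Suc n) - x n))\<^sup>2 + 2 * lam n * inner (F (y n)) (y n - x (Suc n))
             + (1 - \<alpha> * (1 + sqrt 2)) * (norm (x n - y n))\<^sup>2
             - \<alpha> * (norm (x n - y (n - 1)))\<^sup>2
             + (1 - sqrt 2 * \<alpha>) * (norm (x (Suc n) - y n))\<^sup>2 \<le> 0"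
    | (m) th where "0 \<le> th" "y n = x n + th *\<^sub>R (x n - x (n - 1))"
          "norm (lam n *\<^sub>R F (y n) - (th * lam (n - 1)) *\<^sub>R F (y (n - 1))) \<le> \<alpha> * norm (y n - y (n - 1))"
    by auto
  thus ?thesis
  proof cases
    case t thus ?thesis using A by linarith
  next
    case m
    have xn: "x n = metric_proj C (x (n - 1) - lam (n - 1) *\<^sub>R F (y (n - 1)))"
      using xp[of "n - 1"] assms(14) by simp
    have G1: "inner (x (n - 1) - lam (n - 1) *\<^sub>R F (y (n - 1)) - x n) (x (Suc n) - x n) \<le> 0"
      using PP[of "x (n - 1) - lam (n - 1) *\<^sub>R F (y (n - 1))"] xn xC[of "Suc n"] by simp
    have G2: "inner (x (n - 1) - lam (n - 1) *\<^sub>R F (y (n - 1)) - x n) (x (n - 1) - x n) \<le> 0"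
      using PP[of "x (n - 1) - lam (n - 1) *\<^sub>R F (y (n - 1))"] xn xC[of "n - 1"] by simp
    have "- (norm (x (Suc n) - x n))\<^sup>2 + 2*lam n*inner (F (y n)) (y n - x (Suc n)) \<le>
     -(1 - \<alpha>*(1 + sqrt 2))*(norm (x n - y n))\<^sup>2 - (1 - sqrt 2*\<alpha>)*(norm (x (Suc n) - y n))\<^sup>2 + \<alpha>*(norm (x n - y (n - 1)))\<^sup>2"
      by (rule stepB[OF G1 G2 m(2) m(1) m(3) assms(8)])
    thus ?thesis using A by linarith
  qed
qed

end
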